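(* Let $L$ be a component of a $T^*$-colored link diagram and $b$ a basepoint on an arc of $L$ whose label $\chi(b)$ satisfies $\chi(b)\in\{\pm i,\pm j,\pm k\}\cup\{\tfrac{1\pm i\pm j\pm k}{2}\}$. Then $q(L,b)$ is an integer power of $\chi(b)$.
   Context: $T^*=\{\pm1,\pm i,\pm j,\pm k,\tfrac{\pm1\pm i\pm j\pm k}{2}\}$ is the binary tetrahedral group (unit quaternions, all sign combinations). A $T^*$-colored link diagram is an oriented diagram of a tame link $\mathcal L\subset\mathbb{R}^3$ together with a homomorphism $\phi:\pi_1(\mathbb{R}^3\setminus\mathcal L)\to T^*$, in which each arc carries the label $\phi(m_a)$ of its Wirtinger meridian (with respect to a basepoint above the projection plane and the orientation of the arc). At each crossing $c$ where a component passes under an over-arc with label $g$, with incoming under-arc label $x$ and outgoing under-arc label $x'$, the Wirtinger relation $x'=g^{\varepsilon_c}xg^{-\varepsilon_c}$ holds, $\varepsilon_c\in\{\pm1\}$ determined by the sign of the crossing. For a component $L$ with basepoint $b$ on one of its arcs: traverse $L$ from $b$ along its orientation, let $c_1,\dots,c_m$ be the successive crossings where $L$ passes under an arc whose label is not $-1$, with over-arc labels $g_1,\dots,g_m$, and define $q(L,b)=g_m^{\varepsilon_{c_m}}\cdots g_1^{\varepsilon_{c_1}}\in T^*$. *)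

theory Defs
  imports Complex_Main
begin

datatype quat = Quat (Re: real) (Im1: real) (Im2: real) (Im3: real)

instantiation quat :: "{times, one, uminus, inverse}"
begin
definition one_quat :: quat where "one_quat = Quat 1 0 0 0"
definition times_quat :: "quat \<Rightarrow> quat \<Rightarrow> quat" where
  "times_quat p q =
     Quat (Re p * Re q - Im1 p * Im1 q - Im2 p * Im2 q - Im3 p * Im3 q)
          (Re p * Im1 q + Im1 p * Re q + Im2 p * Im3 q - Im3 p * Im2 q)
          (Re p * Im2 q - Im1 p * Im3 q + Im2 p * Re q + Im3 p * Im1 q)
          (Re p * Im3 q + Im1 p * Im2 q - Im2 p * Im1 q + Im3 p * Re q)"
definition uminus_quat :: "quat \<Rightarrow> quat" where
  "uminus_quat p = Quat (- Re p) (- Im1 p) (- Im2 p) (- Im3 p)"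
definition inverse_quat :: "quat \<Rightarrow> quat" where
  "inverse_quat p = (let n = (Re p)\<^sup>2 + (Im1 p)\<^sup>2 + (Im2 p)\<^sup>2 + (Im3 p)\<^sup>2 in
     Quat (Re p / n) (- Im1 p / n) (- Im2 p / n) (- Im3 p / n))"
definition divide_quat :: "quat \<Rightarrow> quat \<Rightarrow> quat" where
  "divide_quat p q = p * inverse q"
instance ..
end

instance quat :: monoid_mult
proof
  fix a b c :: quat
  show "a * b * c = a * (b * c)"
    by (cases a; cases b; cases c) (simp add: times_quat_def algebra_simps)
  show "1 * a = a" by (cases a) (simp add: times_quat_def one_quat_def)
  show "a * 1 = a" by (cases a) (simp add: times_quat_def one_quat_def)
qed

definition qi :: quat where "qi = Quat 0 1 0 0"
definition qj :: quat where "qj = Quat 0 0 1 0"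
definition qk :: quat where "qk = Quat 0 0 0 1"

definition Tstar :: "quat set" where
  "Tstar = {1, -1, qi, -qi, qj, -qj, qk, -qk} \<union>
     {Quat (a/2) (b/2) (c/2) (d/2) | a b c d. a \<in> {1,-1} \<and> b \<in> {1,-1} \<and> c \<in> {1,-1} \<and> d \<in> {1,-1}}"

definition base_labels :: "quat set" where
  "base_labels = {qi, -qi, qj, -qj, qk, -qk} \<union>
     {Quat (1/2) (b/2) (c/2) (d/2) | b c d. b \<in> {1,-1} \<and> c \<in> {1,-1} \<and> d \<in> {1,-1}}"

text \<open>A diagram is given by a finite set A of arcs and a finite set C of crossings.
  Each crossing c has an over-arc ov c, an incoming under-arc ui c, an outgoing
  under-arc uo c (w.r.t. the orientation of the under-strand) and a sign sg c \<in> {1,-1}.\<close>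
definition diagram :: "'a set \<Rightarrow> 'c set \<Rightarrow> ('c \<Rightarrow> 'a) \<Rightarrow> ('c \<Rightarrow> 'a) \<Rightarrow> ('c \<Rightarrow> 'a) \<Rightarrow> ('c \<Rightarrow> int) \<Rightarrow> bool" where
  "diagram A C ov ui uo sg \<longleftrightarrow> finite A \<and> finite C \<and>
     (\<forall>c\<in>C. ov c \<in> A \<and> ui c \<in> A \<and> uo c \<in> A \<and> sg c \<in> {1, -1}) \<and>
     (\<forall>c1\<in>C. \<forall>c2\<in>C. ui c1 = ui c2 \<longrightarrow> c1 = c2) \<and>
     (\<forall>c1\<in>C. \<forall>c2\<in>C. uo c1 = uo c2 \<longrightarrow> c1 = c2)"

text \<open>A T*-coloring: arc labels in T* satisfying the Wirtinger relation
  x' = g^e x g^(-e) at every crossing (equivalently a homomorphism from the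
  link group, by the Wirtinger presentation).\<close>
definition Tstar_coloring :: "'a set \<Rightarrow> 'c set \<Rightarrow> ('c \<Rightarrow> 'a) \<Rightarrow> ('c \<Rightarrow> 'a) \<Rightarrow> ('c \<Rightarrow> 'a) \<Rightarrow> ('c \<Rightarrow> int) \<Rightarrow> ('a \<Rightarrow> quat) \<Rightarrow> bool" where
  "Tstar_coloring A C ov ui uo sg chi \<longleftrightarrow>
     (\<forall>a\<in>A. chi a \<in> Tstar) \<and>
     (\<forall>c\<in>C. chi (uo c) = (chi (ov c) powi sg c) * chi (ui c) * (chi (ov c) powi (- sg c)))"

text \<open>cs is the complete list of successive under-crossings met when traversing the
  component of arc a0 once, starting from a basepoint on a0.\<close>
definition component_traversal :: "'c set \<Rightarrow> ('c \<Rightarrow> 'a) \<Rightarrow> ('c \<Rightarrow> 'a) \<Rightarrow> 'a \<Rightarrow> 'c list \<Rightarrow> bool" where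
  "component_traversal C ui uo a0 cs \<longleftrightarrow>
     set cs \<subseteq> C \<and> distinct cs \<and>
     (cs = [] \<longrightarrow> (\<forall>c\<in>C. ui c \<noteq> a0)) \<and>
     (cs \<noteq> [] \<longrightarrow> ui (hd cs) = a0 \<and> uo (last cs) = a0 \<and>
        (\<forall>t. Suc t < length cs \<longrightarrow> ui (cs ! Suc t) = uo (cs ! t)))"

text \<open>q(L,b) = g_m^(e_m) ... g_1^(e_1), skipping crossings whose over-arc label is -1.\<close>
fun qprod :: "('c \<Rightarrow> 'a) \<Rightarrow> ('c \<Rightarrow> int) \<Rightarrow> ('a \<Rightarrow> quat) \<Rightarrow> 'c list \<Rightarrow> quat" where
  "qprod ov sg chi [] = 1"
| "qprod ov sg chi (c # cs) =
     qprod ov sg chi cs * (if chi (ov c) = -1 then 1 else chi (ov c) powi sg c)"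

end

theory Submission
  imports Defs
begin
definition TLi :: "(int \<times> int \<times> int \<times> int) list" where "TLi = [(2, 0, 0, 0), (-2, 0, 0, 0), (0, 2, 0, 0), (0, -2, 0, 0), (0, 0, 2, 0), (0, 0, -2, 0), (0, 0, 0, 2), (0, 0, 0, -2), (1, 1, 1, 1), (1, 1, 1, -1), (1, 1, -1, 1), (1, 1, -1, -1), (1, -1, 1, 1), (1, -1, 1, -1), (1, -1, -1, 1), (1, -1, -1, -1), (-1, 1, 1, 1), (-1, 1, 1, -1), (-1, 1, -1, 1), (-1, 1, -1, -1), (-1, -1, 1, 1), (-1, -1, 1, -1), (-1, -1, -1, 1), (-1, -1, -1, -1)]"

definition BLi :: "(int \<times> int \<times> int \<times> int) list" where "BLi = [(0, 2, 0, 0), (0, -2, 0, 0), (0, 0, 2, 0), (0, 0, -2, 0), (0, 0, 0, 2), (0, 0, 0, -2), (1, 1, 1, 1), (1, 1, 1, -1), (1, 1, -1, 1), (1, 1, -1, -1), (1, -1, 1, 1), (1, -1, 1, -1), (1, -1, -1, 1), (1, -1, -1, -1)]"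

fun mi :: "int \<times> int \<times> int \<times> int \<Rightarrow> int \<times> int \<times> int \<times> int \<Rightarrow> int \<times> int \<times> int \<times> int" where
  "mi (a1,b1,c1,d1) (a2,b2,c2,d2) =
     (a1*a2 - b1*b2 - c1*c2 - d1*d2, a1*b2 + b1*a2 + c1*d2 - d1*c2,
      a1*c2 - b1*d2 + c1*a2 + d1*b2, a1*d2 + b1*c2 - c1*b2 + d1*a2)"

fun dbl :: "int \<times> int \<times> int \<times> int \<Rightarrow> int \<times> int \<times> int \<times> int" where
  "dbl (a,b,c,d) = (2*a,2*b,2*c,2*d)"

fun hlf :: "int \<times> int \<times> int \<times> int \<Rightarrow> int \<times> int \<times> int \<times> int" where
  "hlf (a,b,c,d) = (a div 2, b div 2, c div 2, d div 2)"

fun cnj :: "int \<times> int \<times> int \<times> int \<Rightarrow> int \<times> int \<times> int \<times> int" where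
  "cnj (a,b,c,d) = (a,-b,-c,-d)"

fun toQ :: "int \<times> int \<times> int \<times> int \<Rightarrow> quat" where
  "toQ (a,b,c,d) = Quat (of_int a/2) (of_int b/2) (of_int c/2) (of_int d/2)"

fun sc4 :: "int \<times> int \<times> int \<times> int \<Rightarrow> quat" where
  "sc4 (a,b,c,d) = Quat (of_int a/4) (of_int b/4) (of_int c/4) (of_int d/4)"

fun pw :: "int \<times> int \<times> int \<times> int \<Rightarrow> nat \<Rightarrow> int \<times> int \<times> int \<times> int" where
  "pw x 0 = (2,0,0,0)"
| "pw x (Suc n) = hlf (mi x (pw x n))"

lemma TLi_closed: "\<forall>x\<in>set TLi. \<forall>y\<in>set TLi. \<exists>z\<in>set TLi. mi x y = dbl z"
  unfolding TLi_def by code_simp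

lemma TLi_cnj: "\<forall>x\<in>set TLi. cnj x \<in> set TLi \<and> mi x (cnj x) = dbl (2,0,0,0) \<and> mi (cnj x) x = dbl (2,0,0,0)"
  unfolding TLi_def by code_simp

lemma TLi_norm: "\<forall>x\<in>set TLi. (case x of (a,b,c,d) \<Rightarrow> a*a+b*b+c*c+d*d = 4)"
  unfolding TLi_def by code_simp

lemma BLi_sub: "\<forall>x\<in>set BLi. x \<in> set TLi"
  unfolding TLi_def BLi_def by code_simp

lemma BLi_cent: "\<forall>x\<in>set BLi. \<forall>y\<in>set TLi. mi x y = mi y x \<longrightarrow> (\<exists>n\<in>set [0..<6]. y = pw x n)"
  unfolding TLi_def BLi_def by code_simp

lemma hlf_dbl: "hlf (dbl z) = z"
  by (cases z) auto

lemma mult_sc4: "toQ x * toQ y = sc4 (mi x y)"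
  by (cases x; cases y) (simp add: times_quat_def field_simps)

lemma sc4_dbl: "sc4 (dbl z) = toQ z"
  by (cases z) simp

lemma sc4_inj: "sc4 x = sc4 y \<Longrightarrow> x = y"
  by (cases x; cases y) simp

lemma toQ_mult: "mi x y = dbl z \<Longrightarrow> toQ x * toQ y = toQ z"
  by (simp add: mult_sc4 sc4_dbl)

lemma toQ_one: "toQ (2,0,0,0) = 1"
  by (simp add: one_quat_def)

lemma Tstar_TLi: "Tstar = toQ ` set TLi"
proof -
  have e: "{Quat (a/2) (b/2) (c/2) (d/2) | a b c d. a \<in> {1,-1} \<and> b \<in> {1,-1} \<and> c \<in> {1,-1} \<and> d \<in> {1,-1}}
    = {x. \<exists>a\<in>{1,-1::real}. \<exists>b\<in>{1,-1::real}. \<exists>c\<in>{1,-1::real}. \<exists>d\<in>{1,-1::real}. x = Quat (a/2) (b/2) (c/2) (d/2)}" by blast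
  show ?thesis unfolding Tstar_def e TLi_def one_quat_def uminus_quat_def qi_def qj_def qk_def
    by (intro set_eqI) (simp; blast)
qed

lemma base_BLi: "base_labels = toQ ` set BLi"
proof -
  have e: "{Quat (1/2) (b/2) (c/2) (d/2) | b c d. b \<in> {1,-1} \<and> c \<in> {1,-1} \<and> d \<in> {1,-1}}
    = {x. \<exists>b\<in>{1,-1::real}. \<exists>c\<in>{1,-1::real}. \<exists>d\<in>{1,-1::real}. x = Quat (1/2) (b/2) (c/2) (d/2)}" by blast
  show ?thesis unfolding base_labels_def e BLi_def uminus_quat_def qi_def qj_def qk_def
    by (intro set_eqI) (simp; blast)
qed


lemma Tstar_mult: "x \<in> Tstar \<Longrightarrow> y \<in> Tstar \<Longrightarrow> x * y \<in> Tstar"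
  unfolding Tstar_TLi using TLi_closed toQ_mult by blast

lemma one_Tstar: "1 \<in> Tstar"
  proof -
  have "(2,0,0,0) \<in> set TLi" by (simp add: TLi_def)
  thus ?thesis unfolding Tstar_TLi using toQ_one by (metis image_eqI)
qed

lemma inv_toQ:
  assumes "x \<in> set TLi" shows "inverse (toQ x) = toQ (cnj x)"
proof -
  obtain a b c d where x: "x = (a,b,c,d)" by (cases x) auto
  have n: "a*a+b*b+c*c+d*d = 4" using TLi_norm assms x by fastforce
  hence "(of_int a/2)\<^sup>2 + (of_int b/2)\<^sup>2 + (of_int c/2)\<^sup>2 + (of_int d/2)\<^sup>2 = (1::real)"
  proof -
    have "real_of_int (a*a+b*b+c*c+d*d) = 4" using n by simp
    thus ?thesis by (simp add: power2_eq_square field_simps)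
  qed
  thus ?thesis unfolding x by (simp add: inverse_quat_def Let_def)
qed

lemma Tstar_inv: "x \<in> Tstar \<Longrightarrow> inverse x \<in> Tstar \<and> x * inverse x = 1 \<and> inverse x * x = 1"
proof -
  assume "x \<in> Tstar"
  then obtain y where y: "y \<in> set TLi" "x = toQ y" unfolding Tstar_TLi by blast
  have "toQ y * toQ (cnj y) = 1" "toQ (cnj y) * toQ y = 1" "cnj y \<in> set TLi"
    using TLi_cnj y(1) toQ_mult toQ_one by metis+
  thus ?thesis using y inv_toQ unfolding Tstar_TLi by auto
qed

lemma powi_props:
  assumes "g \<in> Tstar" "e \<in> {1,-1::int}"
  shows "g powi e \<in> Tstar \<and> g powi (-e) * g powi e = 1"
  using assms Tstar_inv[OF assms(1)] by (auto simp: power_int_def)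

lemma pw_props: "x \<in> set TLi \<Longrightarrow> pw x n \<in> set TLi \<and> toQ (pw x n) = toQ x ^ n"
proof (induction n)
  case 0 thus ?case by (simp add: toQ_one del: toQ.simps) (simp add: TLi_def)
next
  case (Suc n)
  then obtain z where z: "z \<in> set TLi" "mi x (pw x n) = dbl z" using TLi_closed by blast
  have "pw x (Suc n) = z" using z by (simp add: hlf_dbl)
  moreover have "toQ z = toQ x * toQ (pw x n)" using toQ_mult[OF z(2)] by simp
  ultimately show ?case using Suc z by simp
qed

lemma centralizer:
  assumes "x \<in> base_labels" "q \<in> Tstar" "x * q = q * x"
  shows "\<exists>n::int. q = x powi n"
proof -
  obtain xi where xi: "xi \<in> set BLi" "x = toQ xi" using assms(1) unfolding base_BLi by blast
  obtain y where y: "y \<in> set TLi" "q = toQ y" using assms(2) unfolding Tstar_TLi by blast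
  have "mi xi y = mi y xi" using assms(3) xi y by (metis mult_sc4 sc4_inj)
  then obtain n where "y = pw xi n" using BLi_cent xi y by blast
  hence "q = x ^ n" using pw_props BLi_sub xi y by metis
  hence "q = x powi int n" by (simp add: power_int_def)
  thus ?thesis by blast
qed


definition hh :: "('c \<Rightarrow> 'a) \<Rightarrow> ('c \<Rightarrow> int) \<Rightarrow> ('a \<Rightarrow> quat) \<Rightarrow> 'c \<Rightarrow> quat" where
  "hh ov sg chi c = (if chi (ov c) = -1 then 1 else chi (ov c) powi sg c)"

lemma qprod_hh: "qprod ov sg chi (c # cs) = qprod ov sg chi cs * hh ov sg chi c"
  by (simp add: hh_def)

declare qprod.simps(2)[simp del]

lemma neg_mult: "(-1 :: quat) * y = - y" "y * (-1 :: quat) = - y"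
  by (cases y; simp add: times_quat_def uminus_quat_def one_quat_def)+

lemma neg_inj: "- (x::quat) = - y \<Longrightarrow> x = y"
  by (cases x; cases y; simp add: uminus_quat_def)

lemma step:
  assumes "chi (ov c) \<in> Tstar" "sg c \<in> {1,-1}"
    and w: "chi (uo c) = (chi (ov c) powi sg c) * chi (ui c) * (chi (ov c) powi (- sg c))"
  shows "chi (uo c) * hh ov sg chi c = hh ov sg chi c * chi (ui c)"
proof -
  define g where "g = chi (ov c) powi sg c"
  have g1: "chi (ov c) powi (- sg c) * g = 1" using powi_props[OF assms(1,2)] g_def by simp
  have gen: "chi (uo c) * g = g * chi (ui c)"
    using w g1 by (simp add: g_def mult.assoc)
  show ?thesis
  proof (cases "chi (ov c) = -1")
    case True
    have "g = -1"
    proof -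
      have "inverse (-1::quat) = -1" by (simp add: inverse_quat_def one_quat_def uminus_quat_def Let_def)
      thus ?thesis using True assms(2) by (auto simp: g_def power_int_def)
    qed
    hence "chi (uo c) = chi (ui c)" using gen neg_mult neg_inj by metis
    thus ?thesis using True by (simp add: hh_def)
  next
    case False
    thus ?thesis using gen by (simp add: hh_def g_def)
  qed
qed

lemma hh_Tstar: "chi (ov c) \<in> Tstar \<Longrightarrow> sg c \<in> {1,-1} \<Longrightarrow> hh ov sg chi c \<in> Tstar"
  using powi_props one_Tstar by (simp add: hh_def)

lemma qprod_Tstar: "\<forall>c\<in>set cs. chi (ov c) \<in> Tstar \<and> sg c \<in> {1,-1} \<Longrightarrow> qprod ov sg chi cs \<in> Tstar"
proof (induction cs)
  case Nil thus ?case by (simp add: one_Tstar)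
next
  case (Cons c cs) thus ?case unfolding qprod_hh by (intro Tstar_mult hh_Tstar) auto
qed

lemma chain:
  assumes "\<forall>c\<in>set cs. chi (ov c) \<in> Tstar \<and> sg c \<in> {1,-1} \<and>
      chi (uo c) = (chi (ov c) powi sg c) * chi (ui c) * (chi (ov c) powi (- sg c))"
    and "cs \<noteq> []"
    and "\<forall>t. Suc t < length cs \<longrightarrow> ui (cs ! Suc t) = uo (cs ! t)"
  shows "chi (uo (last cs)) * qprod ov sg chi cs = qprod ov sg chi cs * chi (ui (hd cs))"
  using assms
proof (induction cs)
  case Nil thus ?case by simp
next
  case (Cons c rest)
  have st: "chi (uo c) * hh ov sg chi c = hh ov sg chi c * chi (ui c)"
    using Cons.prems(1) step[of chi ov c sg uo ui] by simp
  show ?case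
  proof (cases "rest = []")
    case True thus ?thesis using st by (simp add: qprod_hh)
  next
    case False
    have ch: "\<forall>t. Suc t < length rest \<longrightarrow> ui (rest ! Suc t) = uo (rest ! t)"
      using Cons.prems(3) by (metis Suc_less_eq length_Cons nth_Cons_Suc)
    have hd: "ui (hd rest) = uo c" using Cons.prems(3) False
      by (metis hd_conv_nth length_Cons length_greater_0_conv nth_Cons_0 nth_Cons_Suc zero_less_Suc Suc_less_eq)
    have IH: "chi (uo (last rest)) * qprod ov sg chi rest = qprod ov sg chi rest * chi (uo c)"
      using Cons.IH Cons.prems(1) False ch hd by simp
    have "chi (uo (last (c # rest))) * qprod ov sg chi (c # rest)
        = (chi (uo (last rest)) * qprod ov sg chi rest) * hh ov sg chi c"
      using False by (simp add: qprod_hh mult.assoc)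
    also have "\<dots> = qprod ov sg chi rest * (chi (uo c) * hh ov sg chi c)" by (simp add: IH mult.assoc)
    also have "\<dots> = qprod ov sg chi (c # rest) * chi (ui (hd (c # rest)))"
      by (simp add: st qprod_hh mult.assoc)
    finally show ?thesis .
  qed
qed

theorem mainTheorem2:
  fixes A :: "'a set" and C :: "'c set"
    and ov ui uo :: "'c \<Rightarrow> 'a" and sg :: "'c \<Rightarrow> int" and chi :: "'a \<Rightarrow> quat"
    and a0 :: 'a and cs :: "'c list"
  assumes "diagram A C ov ui uo sg"
    and "Tstar_coloring A C ov ui uo sg chi"
    and "a0 \<in> A"
    and "component_traversal C ui uo a0 cs"
    and "chi a0 \<in> base_labels"
  shows "\<exists>n::int. qprod ov sg chi cs = chi a0 powi n"
proof (cases "cs = []")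
  case True
  hence "qprod ov sg chi cs = chi a0 powi 0" by simp
  thus ?thesis by blast
next
  case False
  have sub: "set cs \<subseteq> C" using assms(4) by (simp add: component_traversal_def)
  have P: "\<forall>c\<in>set cs. chi (ov c) \<in> Tstar \<and> sg c \<in> {1,-1} \<and>
      chi (uo c) = (chi (ov c) powi sg c) * chi (ui c) * (chi (ov c) powi (- sg c))"
  proof
    fix c assume c: "c \<in> set cs"
    hence cC: "c \<in> C" using sub by blast
    have "ov c \<in> A" "sg c \<in> {1,-1}" using assms(1) cC unfolding diagram_def by blast+
    moreover have "\<forall>a\<in>A. chi a \<in> Tstar" using assms(2) unfolding Tstar_coloring_def by blast
    moreover have "chi (uo c) = (chi (ov c) powi sg c) * chi (ui c) * (chi (ov c) powi (- sg c))"
      using assms(2) cC unfolding Tstar_coloring_def by blast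
    ultimately show "chi (ov c) \<in> Tstar \<and> sg c \<in> {1,-1} \<and>
      chi (uo c) = (chi (ov c) powi sg c) * chi (ui c) * (chi (ov c) powi (- sg c))" by blast
  qed
  have tr: "ui (hd cs) = a0" "uo (last cs) = a0"
    "\<forall>t. Suc t < length cs \<longrightarrow> ui (cs ! Suc t) = uo (cs ! t)"
    using assms(4) False by (simp_all add: component_traversal_def)
  have comm: "chi a0 * qprod ov sg chi cs = qprod ov sg chi cs * chi a0"
    using chain[OF P False tr(3)] tr(1,2) by simp
  have "qprod ov sg chi cs \<in> Tstar" using P by (intro qprod_Tstar) blast
  thus ?thesis using centralizer[OF assms(5) _ comm] by blast
qed

end
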